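(* Let $\mathbf C$ be a category with all finite limits and colimits, and let $\mathsf W,\mathsf C,\mathsf P,\mathsf Q$ be classes of morphisms of $\mathbf C$, each closed under composition and containing all identities, such that: (1) (2-out-of-3) if two of $f$, $g$, $gf$ lie in $\mathsf W$ then so does the third; (2) $\widehat{\mathsf W}=\mathsf W$ and $\widehat{\mathsf C}=\mathsf C$; (3) (a) $\mathsf P\subset\mathsf{RLP}(\mathsf C)$; (b) $\mathsf Q\subset\mathsf{RLP}(\mathsf C\cap\mathsf W)$; (4) every morphism $f$ factors (a) as $f=pi$ with $i\in\mathsf C$, $p\in\mathsf P$, and (b) as $f=qj$ with $j\in\mathsf C\cap\mathsf W$, $q\in\mathsf Q$; (5) $\mathsf P\subset\mathsf W$. Then $\mathsf W$, $\mathsf C$ and $\widehat{\mathsf Q}$ are the weak equivalences, cofibrations and fibrations of a model category structure on $\mathbf C$.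
   Context: $\widehat{\mathsf S}$ denotes the class of morphisms that are retracts (in the arrow category) of elements of $\mathsf S$. $\mathsf{RLP}(\mathsf S)$ is the class of morphisms $p:E\to B$ such that for every commutative square $g\circ i=p\circ f$ with $i:A\to X$ in $\mathsf S$, $f:A\to E$, $g:X\to B$, there is $h:X\to E$ with $ph=g$ and $hi=f$. *)

theory Defs
  imports Main
begin

record ('o, 'm) cat =
  Obj  :: "'o set"
  Mor  :: "'m set"
  Dom  :: "'m \<Rightarrow> 'o"
  Cod  :: "'m \<Rightarrow> 'o"
  Id   :: "'o \<Rightarrow> 'm"
  Comp :: "'m \<Rightarrow> 'm \<Rightarrow> 'm"   (* Comp g f = g \<circ> f *)

definition hom :: "('o, 'm) cat \<Rightarrow> 'o \<Rightarrow> 'o \<Rightarrow> 'm set" where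
  "hom C a b = {f \<in> Mor C. Dom C f = a \<and> Cod C f = b}"

definition category :: "('o, 'm) cat \<Rightarrow> bool" where
  "category C \<longleftrightarrow>
     (\<forall>f\<in>Mor C. Dom C f \<in> Obj C \<and> Cod C f \<in> Obj C) \<and>
     (\<forall>a\<in>Obj C. Id C a \<in> hom C a a) \<and>
     (\<forall>f\<in>Mor C. \<forall>g\<in>Mor C. Cod C f = Dom C g \<longrightarrow>
        Comp C g f \<in> hom C (Dom C f) (Cod C g)) \<and>
     (\<forall>f\<in>Mor C. Comp C (Id C (Cod C f)) f = f \<and> Comp C f (Id C (Dom C f)) = f) \<and>
     (\<forall>f\<in>Mor C. \<forall>g\<in>Mor C. \<forall>h\<in>Mor C. Cod C f = Dom C g \<longrightarrow> Cod C g = Dom C h \<longrightarrow>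
        Comp C h (Comp C g f) = Comp C (Comp C h g) f)"

definition "functor" :: "('a, 'b) cat \<Rightarrow> ('o, 'm) cat \<Rightarrow> ('a \<Rightarrow> 'o) \<Rightarrow> ('b \<Rightarrow> 'm) \<Rightarrow> bool" where
  "functor J C Fo Fm \<longleftrightarrow>
     (\<forall>j\<in>Obj J. Fo j \<in> Obj C) \<and>
     (\<forall>u\<in>Mor J. Fm u \<in> hom C (Fo (Dom J u)) (Fo (Cod J u))) \<and>
     (\<forall>j\<in>Obj J. Fm (Id J j) = Id C (Fo j)) \<and>
     (\<forall>u\<in>Mor J. \<forall>v\<in>Mor J. Cod J u = Dom J v \<longrightarrow> Fm (Comp J v u) = Comp C (Fm v) (Fm u))"

definition cone :: "('a, 'b) cat \<Rightarrow> ('o, 'm) cat \<Rightarrow> ('a \<Rightarrow> 'o) \<Rightarrow> ('b \<Rightarrow> 'm)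
    \<Rightarrow> 'o \<Rightarrow> ('a \<Rightarrow> 'm) \<Rightarrow> bool" where
  "cone J C Fo Fm L \<pi> \<longleftrightarrow> L \<in> Obj C \<and>
     (\<forall>j\<in>Obj J. \<pi> j \<in> hom C L (Fo j)) \<and>
     (\<forall>u\<in>Mor J. Comp C (Fm u) (\<pi> (Dom J u)) = \<pi> (Cod J u))"

definition limit :: "('a, 'b) cat \<Rightarrow> ('o, 'm) cat \<Rightarrow> ('a \<Rightarrow> 'o) \<Rightarrow> ('b \<Rightarrow> 'm)
    \<Rightarrow> 'o \<Rightarrow> ('a \<Rightarrow> 'm) \<Rightarrow> bool" where
  "limit J C Fo Fm L \<pi> \<longleftrightarrow> cone J C Fo Fm L \<pi> \<and>
     (\<forall>L' \<pi>'. cone J C Fo Fm L' \<pi>' \<longrightarrow>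
        (\<exists>h\<in>hom C L' L. (\<forall>j\<in>Obj J. Comp C (\<pi> j) h = \<pi>' j) \<and>
           (\<forall>h'\<in>hom C L' L. (\<forall>j\<in>Obj J. Comp C (\<pi> j) h' = \<pi>' j) \<longrightarrow> h' = h)))"

definition cocone :: "('a, 'b) cat \<Rightarrow> ('o, 'm) cat \<Rightarrow> ('a \<Rightarrow> 'o) \<Rightarrow> ('b \<Rightarrow> 'm)
    \<Rightarrow> 'o \<Rightarrow> ('a \<Rightarrow> 'm) \<Rightarrow> bool" where
  "cocone J C Fo Fm L \<sigma> \<longleftrightarrow> L \<in> Obj C \<and>
     (\<forall>j\<in>Obj J. \<sigma> j \<in> hom C (Fo j) L) \<and>
     (\<forall>u\<in>Mor J. Comp C (\<sigma> (Cod J u)) (Fm u) = \<sigma> (Dom J u))"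

definition colimit :: "('a, 'b) cat \<Rightarrow> ('o, 'm) cat \<Rightarrow> ('a \<Rightarrow> 'o) \<Rightarrow> ('b \<Rightarrow> 'm)
    \<Rightarrow> 'o \<Rightarrow> ('a \<Rightarrow> 'm) \<Rightarrow> bool" where
  "colimit J C Fo Fm L \<sigma> \<longleftrightarrow> cocone J C Fo Fm L \<sigma> \<and>
     (\<forall>L' \<sigma>'. cocone J C Fo Fm L' \<sigma>' \<longrightarrow>
        (\<exists>h\<in>hom C L L'. (\<forall>j\<in>Obj J. Comp C h (\<sigma> j) = \<sigma>' j) \<and>
           (\<forall>h'\<in>hom C L L'. (\<forall>j\<in>Obj J. Comp C h' (\<sigma> j) = \<sigma>' j) \<longrightarrow> h' = h)))"

text \<open>Finite index categories are taken with objects and morphisms in nat; every finite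
  category is isomorphic to such a one.\<close>

definition finite_category :: "(nat, nat) cat \<Rightarrow> bool" where
  "finite_category J \<longleftrightarrow> category J \<and> finite (Obj J) \<and> finite (Mor J)"

definition has_finite_limits :: "('o, 'm) cat \<Rightarrow> bool" where
  "has_finite_limits C \<longleftrightarrow>
     (\<forall>(J :: (nat, nat) cat) Fo Fm. finite_category J \<and> functor J C Fo Fm \<longrightarrow>
        (\<exists>L \<pi>. limit J C Fo Fm L \<pi>))"

definition has_finite_colimits :: "('o, 'm) cat \<Rightarrow> bool" where
  "has_finite_colimits C \<longleftrightarrow>
     (\<forall>(J :: (nat, nat) cat) Fo Fm. finite_category J \<and> functor J C Fo Fm \<longrightarrow>
        (\<exists>L \<sigma>. colimit J C Fo Fm L \<sigma>))"

definition closed_comp_ids :: "('o, 'm) cat \<Rightarrow> 'm set \<Rightarrow> bool" where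
  "closed_comp_ids C S \<longleftrightarrow> S \<subseteq> Mor C \<and>
     (\<forall>a\<in>Obj C. Id C a \<in> S) \<and>
     (\<forall>f\<in>S. \<forall>g\<in>S. Cod C f = Dom C g \<longrightarrow> Comp C g f \<in> S)"

definition two_out_of_three :: "('o, 'm) cat \<Rightarrow> 'm set \<Rightarrow> bool" where
  "two_out_of_three C W \<longleftrightarrow>
     (\<forall>f\<in>Mor C. \<forall>g\<in>Mor C. Cod C f = Dom C g \<longrightarrow>
        ((f \<in> W \<and> g \<in> W \<longrightarrow> Comp C g f \<in> W) \<and>
         (f \<in> W \<and> Comp C g f \<in> W \<longrightarrow> g \<in> W) \<and>
         (g \<in> W \<and> Comp C g f \<in> W \<longrightarrow> f \<in> W)))"

definition is_retract :: "('o, 'm) cat \<Rightarrow> 'm \<Rightarrow> 'm \<Rightarrow> bool" where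
  "is_retract C f g \<longleftrightarrow> f \<in> Mor C \<and> g \<in> Mor C \<and>
     (\<exists>i r j s. i \<in> hom C (Dom C f) (Dom C g) \<and> r \<in> hom C (Dom C g) (Dom C f) \<and>
                j \<in> hom C (Cod C f) (Cod C g) \<and> s \<in> hom C (Cod C g) (Cod C f) \<and>
                Comp C r i = Id C (Dom C f) \<and> Comp C s j = Id C (Cod C f) \<and>
                Comp C g i = Comp C j f \<and> Comp C f r = Comp C s g)"

definition retract_closure :: "('o, 'm) cat \<Rightarrow> 'm set \<Rightarrow> 'm set" where
  "retract_closure C S = {f \<in> Mor C. \<exists>g\<in>S. is_retract C f g}"

definition lifts :: "('o, 'm) cat \<Rightarrow> 'm \<Rightarrow> 'm \<Rightarrow> bool" where
  "lifts C i p \<longleftrightarrow>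
     (\<forall>f g. f \<in> hom C (Dom C i) (Dom C p) \<and> g \<in> hom C (Cod C i) (Cod C p) \<and>
            Comp C g i = Comp C p f \<longrightarrow>
        (\<exists>h\<in>hom C (Cod C i) (Dom C p). Comp C p h = g \<and> Comp C h i = f))"

definition RLP :: "('o, 'm) cat \<Rightarrow> 'm set \<Rightarrow> 'm set" where
  "RLP C S = {p \<in> Mor C. \<forall>i\<in>S. lifts C i p}"

definition factors_as :: "('o, 'm) cat \<Rightarrow> 'm set \<Rightarrow> 'm set \<Rightarrow> bool" where
  "factors_as C L R \<longleftrightarrow>
     (\<forall>f\<in>Mor C. \<exists>i p. i \<in> L \<and> p \<in> R \<and> Cod C i = Dom C p \<and> Comp C p i = f)"

definition model_structure :: "('o, 'm) cat \<Rightarrow> 'm set \<Rightarrow> 'm set \<Rightarrow> 'm set \<Rightarrow> bool" where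
  "model_structure C W Cof Fib \<longleftrightarrow>
     category C \<and> has_finite_limits C \<and> has_finite_colimits C \<and>
     W \<subseteq> Mor C \<and> Cof \<subseteq> Mor C \<and> Fib \<subseteq> Mor C \<and>
     two_out_of_three C W \<and>
     retract_closure C W = W \<and> retract_closure C Cof = Cof \<and> retract_closure C Fib = Fib \<and>
     (\<forall>i\<in>Cof \<inter> W. \<forall>p\<in>Fib. lifts C i p) \<and>
     (\<forall>i\<in>Cof. \<forall>p\<in>Fib \<inter> W. lifts C i p) \<and>
     factors_as C (Cof \<inter> W) Fib \<and>
     factors_as C Cof (Fib \<inter> W)"

end

theory Submission
  imports Defs
begin

lemma homD: "f \<in> hom C a b \<Longrightarrow> f \<in> Mor C \<and> Dom C f = a \<and> Cod C f = b"
  by (simp add: hom_def)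

lemma homI: "f \<in> Mor C \<Longrightarrow> Dom C f = a \<Longrightarrow> Cod C f = b \<Longrightarrow> f \<in> hom C a b"
  by (simp add: hom_def)

lemma comp_hom: "category C \<Longrightarrow> f \<in> hom C a b \<Longrightarrow> g \<in> hom C b c \<Longrightarrow> Comp C g f \<in> hom C a c"
  unfolding category_def hom_def by auto

lemma id_hom: "category C \<Longrightarrow> a \<in> Obj C \<Longrightarrow> Id C a \<in> hom C a a"
  unfolding category_def by auto

lemma dom_obj: "category C \<Longrightarrow> f \<in> Mor C \<Longrightarrow> Dom C f \<in> Obj C"
  unfolding category_def by auto
lemma cod_obj: "category C \<Longrightarrow> f \<in> Mor C \<Longrightarrow> Cod C f \<in> Obj C"
  unfolding category_def by auto

lemma id_left: "category C \<Longrightarrow> f \<in> hom C a b \<Longrightarrow> Comp C (Id C b) f = f"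
  unfolding category_def hom_def by auto
lemma id_right: "category C \<Longrightarrow> f \<in> hom C a b \<Longrightarrow> Comp C f (Id C a) = f"
  unfolding category_def hom_def by auto

lemma assoc: "category C \<Longrightarrow> f \<in> hom C a b \<Longrightarrow> g \<in> hom C b c \<Longrightarrow> h \<in> hom C c d \<Longrightarrow>
   Comp C h (Comp C g f) = Comp C (Comp C h g) f"
  unfolding category_def hom_def by auto

lemma retract_A:
  assumes C: "category C" and i: "i \<in> hom C a z" and p: "p \<in> hom C z b"
    and q: "Comp C p i = q" and l: "lifts C i q"
  shows "is_retract C q p"
proof -
  have a: "a \<in> Obj C" using i dom_obj[OF C] homD by metis
  have b: "b \<in> Obj C" using p cod_obj[OF C] homD by metis
  have qh: "q \<in> hom C a b" using comp_hom[OF C i p] q by simp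
  have ida: "Id C a \<in> hom C a a" by (rule id_hom[OF C a])
  have idb: "Id C b \<in> hom C b b" by (rule id_hom[OF C b])
  have "Comp C p i = Comp C q (Id C a)" using id_right[OF C qh] q by simp
  then obtain h where h: "h \<in> hom C z a" "Comp C q h = p" "Comp C h i = Id C a"
    using l ida p i qh homD unfolding lifts_def by (metis (no_types, lifting))
  have D: "Dom C q = a" "Cod C q = b" "Dom C p = z" "Cod C p = b" "q \<in> Mor C" "p \<in> Mor C"
    using qh p homD by metis+
  have X: "i \<in> hom C (Dom C q) (Dom C p) \<and> h \<in> hom C (Dom C p) (Dom C q) \<and>
      Id C b \<in> hom C (Cod C q) (Cod C p) \<and> Id C b \<in> hom C (Cod C p) (Cod C q) \<and>
      Comp C h i = Id C (Dom C q) \<and> Comp C (Id C b) (Id C b) = Id C (Cod C q) \<and>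
      Comp C p i = Comp C (Id C b) q \<and> Comp C q h = Comp C (Id C b) p"
    using D i h idb id_left[OF C idb] id_left[OF C qh] id_left[OF C p] q by simp
  show ?thesis unfolding is_retract_def using X D by blast
qed

lemma retract_B:
  assumes C: "category C" and j: "j \<in> hom C a z" and q: "q \<in> hom C z b"
    and p: "Comp C q j = p" and l: "lifts C j p"
  shows "is_retract C p q"
proof -
  have a: "a \<in> Obj C" using j dom_obj[OF C] homD by metis
  have b: "b \<in> Obj C" using q cod_obj[OF C] homD by metis
  have ph: "p \<in> hom C a b" using comp_hom[OF C j q] p by simp
  have ida: "Id C a \<in> hom C a a" by (rule id_hom[OF C a])
  have idb: "Id C b \<in> hom C b b" by (rule id_hom[OF C b])
  have "Comp C q j = Comp C p (Id C a)" using id_right[OF C ph] p by simp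
  then obtain h where h: "h \<in> hom C z a" "Comp C p h = q" "Comp C h j = Id C a"
    using l ida q j ph homD unfolding lifts_def by (metis (no_types, lifting))
  have D: "Dom C p = a" "Cod C p = b" "Dom C q = z" "Cod C q = b" "q \<in> Mor C" "p \<in> Mor C"
    using ph q homD by metis+
  have X: "j \<in> hom C (Dom C p) (Dom C q) \<and> h \<in> hom C (Dom C q) (Dom C p) \<and>
      Id C b \<in> hom C (Cod C p) (Cod C q) \<and> Id C b \<in> hom C (Cod C q) (Cod C p) \<and>
      Comp C h j = Id C (Dom C p) \<and> Comp C (Id C b) (Id C b) = Id C (Cod C p) \<and>
      Comp C q j = Comp C (Id C b) p \<and> Comp C p h = Comp C (Id C b) q"
    using D j h idb id_left[OF C idb] id_left[OF C ph] id_left[OF C q] p by simp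
  show ?thesis unfolding is_retract_def using X D by blast
qed

lemma lifts_retract:
  assumes C: "category C" and l: "lifts C i p" and r: "is_retract C p' p" and iM: "i \<in> Mor C"
  shows "lifts C i p'"
  unfolding lifts_def
proof (intro allI impI)
  fix f g
  assume fg: "f \<in> hom C (Dom C i) (Dom C p') \<and> g \<in> hom C (Cod C i) (Cod C p') \<and>
            Comp C g i = Comp C p' f"
  obtain ii rr jj ss where R: "ii \<in> hom C (Dom C p') (Dom C p)" "rr \<in> hom C (Dom C p) (Dom C p')"
    "jj \<in> hom C (Cod C p') (Cod C p)" "ss \<in> hom C (Cod C p) (Cod C p')"
    "Comp C rr ii = Id C (Dom C p')" "Comp C ss jj = Id C (Cod C p')"
    "Comp C p ii = Comp C jj p'" "Comp C p' rr = Comp C ss p" and pm: "p \<in> Mor C" "p' \<in> Mor C"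
    using r unfolding is_retract_def by blast
  have f: "f \<in> hom C (Dom C i) (Dom C p')" and g: "g \<in> hom C (Cod C i) (Cod C p')"
    and sq: "Comp C g i = Comp C p' f" using fg by auto
  have ph: "p \<in> hom C (Dom C p) (Cod C p)" and p'h: "p' \<in> hom C (Dom C p') (Cod C p')"
    using pm by (auto simp: hom_def)
  have im: "i \<in> hom C (Dom C i) (Cod C i)" using iM by (simp add: hom_def)
  have f2: "Comp C ii f \<in> hom C (Dom C i) (Dom C p)" using comp_hom[OF C f R(1)] .
  have g2: "Comp C jj g \<in> hom C (Cod C i) (Cod C p)" using comp_hom[OF C g R(3)] .
  have "Comp C (Comp C jj g) i = Comp C jj (Comp C g i)" using assoc[OF C im g R(3)] by simp
  also have "\<dots> = Comp C jj (Comp C p' f)" using sq by simp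
  also have "\<dots> = Comp C (Comp C jj p') f" using assoc[OF C f p'h R(3)] .
  also have "\<dots> = Comp C (Comp C p ii) f" using R(7) by simp
  also have "\<dots> = Comp C p (Comp C ii f)" using assoc[OF C f R(1) ph] by simp
  finally have sq2: "Comp C (Comp C jj g) i = Comp C p (Comp C ii f)" .
  obtain h where h: "h \<in> hom C (Cod C i) (Dom C p)" "Comp C p h = Comp C jj g" "Comp C h i = Comp C ii f"
    using l f2 g2 sq2 unfolding lifts_def by blast
  have rh: "Comp C rr h \<in> hom C (Cod C i) (Dom C p')" using comp_hom[OF C h(1) R(2)] .
  have e1: "Comp C p' (Comp C rr h) = g"
  proof -
    have "Comp C p' (Comp C rr h) = Comp C (Comp C p' rr) h" using assoc[OF C h(1) R(2) p'h] .
    also have "\<dots> = Comp C (Comp C ss p) h" using R(8) by simp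
    also have "\<dots> = Comp C ss (Comp C p h)" using assoc[OF C h(1) ph R(4)] by simp
    also have "\<dots> = Comp C ss (Comp C jj g)" using h(2) by simp
    also have "\<dots> = Comp C (Comp C ss jj) g" using assoc[OF C g R(3) R(4)] .
    also have "\<dots> = g" using R(6) id_left[OF C g] by simp
    finally show ?thesis .
  qed
  have e2: "Comp C (Comp C rr h) i = f"
  proof -
    have "Comp C (Comp C rr h) i = Comp C rr (Comp C h i)" using assoc[OF C im h(1) R(2)] by simp
    also have "\<dots> = Comp C rr (Comp C ii f)" using h(3) by simp
    also have "\<dots> = Comp C (Comp C rr ii) f" using assoc[OF C f R(1) R(2)] .
    also have "\<dots> = f" using R(5) id_left[OF C f] by simp
    finally show ?thesis .
  qed
  show "\<exists>h\<in>hom C (Cod C i) (Dom C p'). Comp C p' h = g \<and> Comp C h i = f"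
    using rh e1 e2 by blast
qed

lemma retract_refl: "category C \<Longrightarrow> f \<in> Mor C \<Longrightarrow> is_retract C f f"
  unfolding is_retract_def
  apply (intro conjI, assumption, assumption)
  apply (rule exI[of _ "Id C (Dom C f)"], rule exI[of _ "Id C (Dom C f)"],
         rule exI[of _ "Id C (Cod C f)"], rule exI[of _ "Id C (Cod C f)"])
  by (metis (no_types, lifting) homI id_hom dom_obj cod_obj id_left id_right)

lemma retract_trans:
  assumes C: "category C" and r1: "is_retract C f g" and r2: "is_retract C g k"
  shows "is_retract C f k"
proof -
  obtain i r j s where A: "i \<in> hom C (Dom C f) (Dom C g)" "r \<in> hom C (Dom C g) (Dom C f)"
    "j \<in> hom C (Cod C f) (Cod C g)" "s \<in> hom C (Cod C g) (Cod C f)"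
    "Comp C r i = Id C (Dom C f)" "Comp C s j = Id C (Cod C f)"
    "Comp C g i = Comp C j f" "Comp C f r = Comp C s g" and fm: "f \<in> Mor C" "g \<in> Mor C"
    using r1 unfolding is_retract_def by blast
  obtain i' r' j' s' where B: "i' \<in> hom C (Dom C g) (Dom C k)" "r' \<in> hom C (Dom C k) (Dom C g)"
    "j' \<in> hom C (Cod C g) (Cod C k)" "s' \<in> hom C (Cod C k) (Cod C g)"
    "Comp C r' i' = Id C (Dom C g)" "Comp C s' j' = Id C (Cod C g)"
    "Comp C k i' = Comp C j' g" "Comp C g r' = Comp C s' k" and km: "k \<in> Mor C"
    using r2 unfolding is_retract_def by blast
  have fh: "f \<in> hom C (Dom C f) (Cod C f)" and gh: "g \<in> hom C (Dom C g) (Cod C g)"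
    and kh: "k \<in> hom C (Dom C k) (Cod C k)" using fm km by (auto simp: hom_def)
  have c1: "Comp C (Comp C r r') (Comp C i' i) = Id C (Dom C f)"
  proof -
    have "Comp C (Comp C r r') (Comp C i' i) = Comp C r (Comp C r' (Comp C i' i))"
      using assoc[OF C comp_hom[OF C A(1) B(1)] B(2) A(2)] by simp
    also have "\<dots> = Comp C r (Comp C (Comp C r' i') i)" using assoc[OF C A(1) B(1) B(2)] by simp
    also have "\<dots> = Comp C r i" using B(5) id_left[OF C A(1)] by simp
    finally show ?thesis using A(5) by simp
  qed
  have c2: "Comp C (Comp C s s') (Comp C j' j) = Id C (Cod C f)"
  proof -
    have "Comp C (Comp C s s') (Comp C j' j) = Comp C s (Comp C s' (Comp C j' j))"
      using assoc[OF C comp_hom[OF C A(3) B(3)] B(4) A(4)] by simp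
    also have "\<dots> = Comp C s (Comp C (Comp C s' j') j)" using assoc[OF C A(3) B(3) B(4)] by simp
    also have "\<dots> = Comp C s j" using B(6) id_left[OF C A(3)] by simp
    finally show ?thesis using A(6) by simp
  qed
  have c3: "Comp C k (Comp C i' i) = Comp C (Comp C j' j) f"
  proof -
    have "Comp C k (Comp C i' i) = Comp C (Comp C k i') i" using assoc[OF C A(1) B(1) kh] .
    also have "\<dots> = Comp C (Comp C j' g) i" using B(7) by simp
    also have "\<dots> = Comp C j' (Comp C g i)" using assoc[OF C A(1) gh B(3)] by simp
    also have "\<dots> = Comp C j' (Comp C j f)" using A(7) by simp
    also have "\<dots> = Comp C (Comp C j' j) f" using assoc[OF C fh A(3) B(3)] .
    finally show ?thesis .
  qed
  have c4: "Comp C f (Comp C r r') = Comp C (Comp C s s') k"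
  proof -
    have "Comp C f (Comp C r r') = Comp C (Comp C f r) r'" using assoc[OF C B(2) A(2) fh] .
    also have "\<dots> = Comp C (Comp C s g) r'" using A(8) by simp
    also have "\<dots> = Comp C s (Comp C g r')" using assoc[OF C B(2) gh A(4)] by simp
    also have "\<dots> = Comp C s (Comp C s' k)" using B(8) by simp
    also have "\<dots> = Comp C (Comp C s s') k" using assoc[OF C kh B(4) A(4)] .
    finally show ?thesis .
  qed
  show ?thesis unfolding is_retract_def
    using fm km c1 c2 c3 c4 comp_hom[OF C A(1) B(1)] comp_hom[OF C B(2) A(2)]
      comp_hom[OF C A(3) B(3)] comp_hom[OF C B(4) A(4)] by blast
qed

lemma comp_dc: "category C \<Longrightarrow> f \<in> Mor C \<Longrightarrow> g \<in> Mor C \<Longrightarrow> Cod C f = Dom C g \<Longrightarrow>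
   Comp C g f \<in> Mor C \<and> Dom C (Comp C g f) = Dom C f \<and> Cod C (Comp C g f) = Cod C g"
  unfolding category_def hom_def by auto

theorem mainTheorem17:
  fixes C :: "('o, 'm) cat" and W Cf P Q :: "'m set"
  assumes "category C" and "has_finite_limits C" and "has_finite_colimits C"
    and "closed_comp_ids C W" and "closed_comp_ids C Cf"
    and "closed_comp_ids C P" and "closed_comp_ids C Q"
    and "two_out_of_three C W"
    and "retract_closure C W = W" and "retract_closure C Cf = Cf"
    and "P \<subseteq> RLP C Cf" and "Q \<subseteq> RLP C (Cf \<inter> W)"
    and "factors_as C Cf P" and "factors_as C (Cf \<inter> W) Q"
    and "P \<subseteq> W"
  shows "model_structure C W Cf (retract_closure C Q)"
proof -
  note C = assms(1)
  define F where "F = retract_closure C Q"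
  have WM: "W \<subseteq> Mor C" and CM: "Cf \<subseteq> Mor C" and PM: "P \<subseteq> Mor C" and QM: "Q \<subseteq> Mor C"
    using assms(4-7) unfolding closed_comp_ids_def by auto
  have FM: "F \<subseteq> Mor C" unfolding F_def retract_closure_def by auto
  have QF: "Q \<subseteq> F" unfolding F_def retract_closure_def using QM retract_refl[OF C] by auto
  have FF: "retract_closure C F = F"
  proof
    show "retract_closure C F \<subseteq> F"
    proof
      fix f assume "f \<in> retract_closure C F"
      then obtain g where g: "f \<in> Mor C" "g \<in> F" "is_retract C f g" unfolding retract_closure_def by blast
      then obtain q where q: "q \<in> Q" "is_retract C g q" unfolding F_def retract_closure_def by blast
      have "is_retract C f q" by (rule retract_trans[OF C g(3) q(2)])
      thus "f \<in> F" using g(1) q(1) unfolding F_def retract_closure_def by blast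
    qed
    show "F \<subseteq> retract_closure C F"
      unfolding retract_closure_def using FM retract_refl[OF C] by auto
  qed
  have L1: "lifts C i p" if i: "i \<in> Cf \<inter> W" and p: "p \<in> F" for i p
  proof -
    obtain q where "q \<in> Q" "is_retract C p q" using p unfolding F_def retract_closure_def by auto
    moreover have "lifts C i q" using `q \<in> Q` assms(12) i unfolding RLP_def by auto
    ultimately show ?thesis using lifts_retract[OF C _ _ ] i CM by (meson IntD1 subsetD)
  qed
  have L2: "lifts C c q" if c: "c \<in> Cf" and q: "q \<in> F \<inter> W" for c q
  proof -
    have qM: "q \<in> Mor C" using q FM by auto
    obtain i p where ip: "i \<in> Cf" "p \<in> P" "Cod C i = Dom C p" "Comp C p i = q"
      using assms(13) qM unfolding factors_as_def by blast
    have iM: "i \<in> Mor C" and pM: "p \<in> Mor C" using ip CM PM by auto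
    have D: "Dom C q = Dom C i" "Cod C q = Cod C p" using comp_dc[OF C iM pM ip(3)] ip(4) by auto
    have "p \<in> W" using ip assms(15) by auto
    moreover have "q \<in> W" using q by simp
    ultimately have "i \<in> W" using assms(8) iM pM ip(3,4) unfolding two_out_of_three_def by metis
    hence "lifts C i q" using L1 ip q by auto
    moreover have h1: "i \<in> hom C (Dom C q) (Dom C p)" "p \<in> hom C (Dom C p) (Cod C q)"
      using iM pM D ip(3) by (auto simp: hom_def)
    ultimately have "is_retract C q p" using retract_A[OF C h1 ip(4)] by blast
    moreover have "lifts C c p" using ip assms(11) c unfolding RLP_def by auto
    ultimately show ?thesis using lifts_retract[OF C _ _ ] c CM by (meson subsetD)
  qed
  have F1: "factors_as C (Cf \<inter> W) F" using assms(14) QF unfolding factors_as_def by (meson subsetD)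
  have PF: "p \<in> F" if p: "p \<in> P" for p
  proof -
    have pM: "p \<in> Mor C" using p PM by auto
    obtain j q where jq: "j \<in> Cf \<inter> W" "q \<in> Q" "Cod C j = Dom C q" "Comp C q j = p"
      using assms(14) pM unfolding factors_as_def by blast
    have jM: "j \<in> Mor C" and qM: "q \<in> Mor C" using jq CM QM by auto
    have D: "Dom C p = Dom C j" "Cod C p = Cod C q" using comp_dc[OF C jM qM jq(3)] jq(4) by auto
    have "lifts C j p" using jq p assms(11) unfolding RLP_def by auto
    moreover have h1: "j \<in> hom C (Dom C p) (Dom C q)" "q \<in> hom C (Dom C q) (Cod C p)"
      using jM qM D jq(3) by (auto simp: hom_def)
    ultimately have "is_retract C p q" using retract_B[OF C h1 jq(4)] by blast
    thus ?thesis using jq pM unfolding F_def retract_closure_def by blast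
  qed
  have F2: "factors_as C Cf (F \<inter> W)" unfolding factors_as_def
  proof
    fix f assume "f \<in> Mor C"
    then obtain i p where "i \<in> Cf" "p \<in> P" "Cod C i = Dom C p" "Comp C p i = f"
      using assms(13) unfolding factors_as_def by blast
    moreover have "p \<in> F \<inter> W" using PF `p \<in> P` assms(15) by blast
    ultimately show "\<exists>i p. i \<in> Cf \<and> p \<in> F \<inter> W \<and> Cod C i = Dom C p \<and> Comp C p i = f" by blast
  qed
  have L1': "\<forall>i\<in>Cf \<inter> W. \<forall>p\<in>F. lifts C i p" using L1 by blast
  have L2': "\<forall>i\<in>Cf. \<forall>p\<in>F \<inter> W. lifts C i p" using L2 by blast
  show ?thesis unfolding model_structure_def F_def[symmetric]
    using C assms(2,3,8,9,10) WM CM FM FF L1' L2' F1 F2 by simp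
qed

end
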